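(* Let $n\geq 2$ be an integer and let $CCC(n)$ be the crystal cubic carbon graph with $n$ layers. Then the minimum cardinality of a strong resolving set of $CCC(n)$ is $sdim(CCC(n))=32\times 7^{n-2}-1$.
   Context: All graphs are simple and connected; $d(u,v)$ is the shortest-path distance. For vertices $u,v$, $I_G[u,v]$ is the set of vertices lying on some shortest $u$–$v$ path. A vertex $w$ strongly resolves $u$ and $v$ if $v\in I_G[u,w]$ or $u\in I_G[v,w]$. A set $R$ of vertices is a strong resolving set of $G$ if every two distinct vertices of $G$ are strongly resolved by some vertex of $R$; $sdim(G)$ is the minimum size of a strong resolving set. The cube $C_4\Box P_2$ is the graph on $\{1,\dots,8\}$ with edges $12,23,34,14,56,67,78,58$ and $15,26,37,48$. The crystal cubic carbon $CCC(n)$ is constructed as follows. Its vertex set is partitioned into layers $L_1,\dots,L_n$. Layer $L_1$ is a copy of $C_4\Box P_2$ with vertices $1,\dots,8$. For $2\leq k\leq n$, layer $L_k$ consists of $8\times 7^{k-2}$ vertex-disjoint copies of $C_4\Box P_2$ (called cubes), each cube having a distinguished vertex (the vertex labelled $1$ in its copy) called its head vertex. Each vertex $r\in L_1$ is joined by an edge to the head vertex of exactly one cube of $L_2$ (distinct vertices of $L_1$ to distinct cubes). For $2\leq k<n$, each of the $7$ non-head vertices of each cube of $L_k$ is joined by an edge to the head vertex of exactly one cube of $L_{k+1}$, in such a way that every cube of $L_{k+1}$ has its head joined to exactly one such vertex. There are no other edges. Thus $CCC(n)$ has $8+64\sum_{k=2}^{n}7^{k-2}$ vertices. *)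

theory Defs
  imports Main
begin

definition is_walk :: "('a \<Rightarrow> 'a \<Rightarrow> bool) \<Rightarrow> 'a set \<Rightarrow> 'a list \<Rightarrow> bool" where
  "is_walk E V xs \<longleftrightarrow> xs \<noteq> [] \<and> set xs \<subseteq> V \<and>
     (\<forall>i. Suc i < length xs \<longrightarrow> E (xs ! i) (xs ! Suc i))"

definition gdist :: "'a set \<Rightarrow> ('a \<Rightarrow> 'a \<Rightarrow> bool) \<Rightarrow> 'a \<Rightarrow> 'a \<Rightarrow> nat" where
  "gdist V E u v = (LEAST k. \<exists>xs. is_walk E V xs \<and> hd xs = u \<and> last xs = v \<and> length xs = Suc k)"

definition interval :: "'a set \<Rightarrow> ('a \<Rightarrow> 'a \<Rightarrow> bool) \<Rightarrow> 'a \<Rightarrow> 'a \<Rightarrow> 'a set" where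
  "interval V E u v = {w \<in> V. gdist V E u w + gdist V E w v = gdist V E u v}"

definition strongly_resolves :: "'a set \<Rightarrow> ('a \<Rightarrow> 'a \<Rightarrow> bool) \<Rightarrow> 'a \<Rightarrow> 'a \<Rightarrow> 'a \<Rightarrow> bool" where
  "strongly_resolves V E w u v \<longleftrightarrow> v \<in> interval V E u w \<or> u \<in> interval V E v w"

definition strong_resolving_set :: "'a set \<Rightarrow> ('a \<Rightarrow> 'a \<Rightarrow> bool) \<Rightarrow> 'a set \<Rightarrow> bool" where
  "strong_resolving_set V E R \<longleftrightarrow> R \<subseteq> V \<and>
     (\<forall>u\<in>V. \<forall>v\<in>V. u \<noteq> v \<longrightarrow> (\<exists>w\<in>R. strongly_resolves V E w u v))"

definition sdim :: "'a set \<Rightarrow> ('a \<Rightarrow> 'a \<Rightarrow> bool) \<Rightarrow> nat" where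
  "sdim V E = Min (card ` {R. strong_resolving_set V E R})"

definition cube_adj :: "nat \<Rightarrow> nat \<Rightarrow> bool" where
  "cube_adj a b \<longleftrightarrow> {a, b} \<in> {{1,2},{2,3},{3,4},{1,4},{5,6},{6,7},{7,8},{5,8},
                                {1,5},{2,6},{3,7},{4,8}}"

text \<open>A vertex in layer k is a list of length k: [v] for L1; for k \<ge> 2,
  [r, c_2, ..., c_(k-1), v] where r \<in> {1..8} is the vertex of L1 the chain starts at,
  c_j \<in> {2..8} are the non-head vertices through which the cube hangs, and v \<in> {1..8}
  is the label of the vertex within its cube (1 = head).\<close>
definition CCC_V :: "nat \<Rightarrow> nat list set" where
  "CCC_V n = {xs. 1 \<le> length xs \<and> length xs \<le> n \<and> set xs \<subseteq> {1..8} \<and>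
                  (\<forall>i. 0 < i \<and> Suc i < length xs \<longrightarrow> xs ! i \<noteq> 1)}"

definition CCC_E0 :: "nat list \<Rightarrow> nat list \<Rightarrow> bool" where
  "CCC_E0 xs ys \<longleftrightarrow>
     (xs \<noteq> [] \<and> ys \<noteq> [] \<and> butlast xs = butlast ys \<and> cube_adj (last xs) (last ys)) \<or>
     (xs \<noteq> [] \<and> ys = xs @ [1] \<and> (length xs = 1 \<or> last xs \<noteq> 1))"

definition CCC_E :: "nat list \<Rightarrow> nat list \<Rightarrow> bool" where
  "CCC_E xs ys \<longleftrightarrow> CCC_E0 xs ys \<or> CCC_E0 ys xs"

end

theory Submission
  imports Defs
begin



definition hb1 :: "nat \<Rightarrow> bool" where "hb1 a \<longleftrightarrow> a = 2 \<or> a = 3 \<or> a = 6 \<or> a = 7"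
definition hb2 :: "nat \<Rightarrow> bool" where "hb2 a \<longleftrightarrow> a = 3 \<or> a = 4 \<or> a = 7 \<or> a = 8"
definition hb3 :: "nat \<Rightarrow> bool" where "hb3 a \<longleftrightarrow> a = 5 \<or> a = 6 \<or> a = 7 \<or> a = 8"

definition H :: "nat \<Rightarrow> nat \<Rightarrow> nat" where
  "H a b = (if hb1 a = hb1 b then 0 else 1) + (if hb2 a = hb2 b then 0 else 1) + (if hb3 a = hb3 b then 0 else 1)"

definition wt :: "nat \<Rightarrow> nat" where "wt a = H a 1"

definition U :: "nat list \<Rightarrow> nat" where "U xs = sum_list (map (\<lambda>a. wt a + 1) xs)"

fun D :: "nat list \<Rightarrow> nat list \<Rightarrow> nat" where
  "D (x#xs) (y#ys) = (if x = y \<and> xs \<noteq> [] \<and> ys \<noteq> [] then D xs ys else U xs + H x y + U ys)"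
| "D _ _ = 0"

definition toward :: "nat \<Rightarrow> nat \<Rightarrow> nat" where
  "toward a b = (if a = 1 \<and> b = 2 then 1 else if a = 1 \<and> b = 3 then 2 else if a = 1 \<and> b = 4 then 1 else if a = 1 \<and> b = 5 then 1 else if a = 1 \<and> b = 6 then 2 else if a = 1 \<and> b = 7 then 3 else if a = 1 \<and> b = 8 then 4 else if a = 2 \<and> b = 1 then 2 else if a = 2 \<and> b = 3 then 2 else if a = 2 \<and> b = 4 then 1 else if a = 2 \<and> b = 5 then 1 else if a = 2 \<and> b = 6 then 2 else if a = 2 \<and> b = 7 then 3 else if a = 2 \<and> b = 8 then 4 else if a = 3 \<and> b = 1 then 2 else if a = 3 \<and> b = 2 then 3 else if a = 3 \<and> b = 4 then 3 else if a = 3 \<and> b = 5 then 1 else if a = 3 \<and> b = 6 then 2 else if a = 3 \<and> b = 7 then 3 else if a = 3 \<and> b = 8 then 4 else if a = 4 \<and> b = 1 then 4 else if a = 4 \<and> b = 2 then 1 else if a = 4 \<and> b = 3 then 4 else if a = 4 \<and> b = 5 then 1 else if a = 4 \<and> b = 6 then 2 else if a = 4 \<and> b = 7 then 3 else if a = 4 \<and> b = 8 then 4 else if a = 5 \<and> b = 1 then 5 else if a = 5 \<and> b = 2 then 1 else if a = 5 \<and> b = 3 then 2 else if a = 5 \<and> b = 4 then 1 else if a = 5 \<and> b = 6 then 5 else if a = 5 \<and> b = 7 then 6 else if a = 5 \<and> b = 8 then 5 else if a = 6 \<and> b = 1 then 2 else if a = 6 \<and> b = 2 then 6 else if a = 6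 \<and> b = 3 then 2 else if a = 6 \<and> b = 4 then 1 else if a = 6 \<and> b = 5 then 6 else if a = 6 \<and> b = 7 then 6 else if a = 6 \<and> b = 8 then 5 else if a = 7 \<and> b = 1 then 2 else if a = 7 \<and> b = 2 then 3 else if a = 7 \<and> b = 3 then 7 else if a = 7 \<and> b = 4 then 3 else if a = 7 \<and> b = 5 then 6 else if a = 7 \<and> b = 6 then 7 else if a = 7 \<and> b = 8 then 7 else if a = 8 \<and> b = 1 then 4 else if a = 8 \<and> b = 2 then 1 else if a = 8 \<and> b = 3 then 4 else if a = 8 \<and> b = 4 then 8 else if a = 8 \<and> b = 5 then 8 else if a = 8 \<and> b = 6 then 5 else if a = 8 \<and> b = 7 then 8 else 0)"

definition away :: "nat \<Rightarrow> nat \<Rightarrow> nat" where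
  "away a b = (if a = 1 \<and> b = 1 then 2 else if a = 1 \<and> b = 2 then 3 else if a = 1 \<and> b = 3 then 7 else if a = 1 \<and> b = 4 then 3 else if a = 1 \<and> b = 5 then 6 else if a = 1 \<and> b = 6 then 7 else if a = 1 \<and> b = 8 then 7 else if a = 2 \<and> b = 1 then 4 else if a = 2 \<and> b = 2 then 1 else if a = 2 \<and> b = 3 then 4 else if a = 2 \<and> b = 4 then 8 else if a = 2 \<and> b = 5 then 8 else if a = 2 \<and> b = 6 then 5 else if a = 2 \<and> b = 7 then 8 else if a = 3 \<and> b = 1 then 5 else if a = 3 \<and> b = 2 then 1 else if a = 3 \<and> b = 3 then 2 else if a = 3 \<and> b = 4 then 1 else if a = 3 \<and> b = 6 then 5 else if a = 3 \<and> b = 7 then 6 else if a = 3 \<and> b = 8 then 5 else if a = 4 \<and> b = 1 then 2 else if a = 4 \<and> b = 2 then 6 else if a = 4 \<and> b = 3 then 2 else if a = 4 \<and> b = 4 then 1 else if a = 4 \<and> b = 5 then 6 else if a = 4 \<and> b = 7 then 6 else if a = 4 \<and> b = 8 then 5 else if a = 5 \<and> b = 1 then 2 else if a = 5 \<and> b = 2 then 3 else if a = 5 \<and> b = 4 then 3 else if a = 5 \<and> b = 5 then 1 else if a = 5 \<and> b = 6 then 2 else if a = 5 \<and> b = 7 then 3 else if a = 5 \<and> b = 8 then 4 else if a = 6 \<and> b = 1 then 4 else if a = 6 \<and> b = 2 then 1 else if a = 6 \<and> b = 3 then 4 else if a = 6 \<and> b = 5 then 1 else if a = 6 \<and> b =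 6 then 2 else if a = 6 \<and> b = 7 then 3 else if a = 6 \<and> b = 8 then 4 else if a = 7 \<and> b = 2 then 1 else if a = 7 \<and> b = 3 then 2 else if a = 7 \<and> b = 4 then 1 else if a = 7 \<and> b = 5 then 1 else if a = 7 \<and> b = 6 then 2 else if a = 7 \<and> b = 7 then 3 else if a = 7 \<and> b = 8 then 4 else if a = 8 \<and> b = 1 then 2 else if a = 8 \<and> b = 3 then 2 else if a = 8 \<and> b = 4 then 1 else if a = 8 \<and> b = 5 then 1 else if a = 8 \<and> b = 6 then 2 else if a = 8 \<and> b = 7 then 3 else if a = 8 \<and> b = 8 then 4 else 0)"

lemma H_sym: "H a b = H b a" unfolding H_def by auto
lemma H_self[simp]: "H a a = 0" unfolding H_def by auto
lemma H_tri: "H a b \<le> H a c + H c b" unfolding H_def by auto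
lemma H_le3: "H a b \<le> 3" unfolding H_def by auto
lemma wt1[simp]: "wt 1 = 0" unfolding wt_def by simp
lemma wt1'[simp]: "wt (Suc 0) = 0" unfolding wt_def by simp
lemma wt_le3: "wt a \<le> 3" unfolding wt_def by (rule H_le3)

lemma U_simps[simp]: "U [] = 0" "U (x#xs) = wt x + 1 + U xs" "U (xs@ys) = U xs + U ys"
  unfolding U_def by auto

lemma cadj: "cube_adj a b \<longleftrightarrow> (a = 1 \<and> b = 2) \<or> (a = 2 \<and> b = 3) \<or> (a = 3 \<and> b = 4) \<or> (a = 1 \<and> b = 4) \<or> (a = 5 \<and> b = 6) \<or> (a = 6 \<and> b = 7) \<or> (a = 7 \<and> b = 8) \<or> (a = 5 \<and> b = 8) \<or> (a = 1 \<and> b = 5) \<or> (a = 2 \<and> b = 6) \<or> (a = 3 \<and> b = 7) \<or> (a = 4 \<and> b = 8) \<or> (a = 2 \<and> b = 1) \<or> (a = 3 \<and> b = 2) \<or> (a = 4 \<and> b = 3) \<or> (a = 4 \<and> b = 1) \<or> (a = 6 \<and> b = 5) \<or> (a = 7 \<and> b = 6) \<or> (a = 8 \<and> b = 7) \<or> (a = 8 \<and> b = 5) \<or> (a = 5 \<and> b = 1) \<or> (a = 6 \<and> b = 2) \<or> (a = 7 \<and> b = 3) \<or> (a = 8 \<and> b = 4)"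
  unfolding cube_adj_def by (auto simp: doubleton_eq_iff)

lemma cube_adj_H: "cube_adj a b \<Longrightarrow> H a b = 1"
  unfolding cadj by (elim disjE conjE; simp add: H_def hb1_def hb2_def hb3_def)
lemma cube_adj_sym: "cube_adj a b \<Longrightarrow> cube_adj b a"
  unfolding cadj by (elim disjE conjE; simp)
lemma cube_adj_range: "cube_adj a b \<Longrightarrow> b \<in> {1..8}"
  unfolding cadj by (elim disjE conjE; simp)

lemma lab_cases: "(a::nat) \<in> {1..8} \<Longrightarrow> a = 1 \<or> a = 2 \<or> a = 3 \<or> a = 4 \<or> a = 5 \<or> a = 6 \<or> a = 7 \<or> a = 8"
  by auto

lemma H_eq0: "a \<in> {1..8} \<Longrightarrow> b \<in> {1..8} \<Longrightarrow> H a b = 0 \<Longrightarrow> a = b"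
  apply (drule lab_cases, drule lab_cases)
  unfolding H_def hb1_def hb2_def hb3_def by auto

lemma toward: "a \<in> {1..8} \<Longrightarrow> b \<in> {1..8} \<Longrightarrow> a \<noteq> b \<Longrightarrow> cube_adj b (toward a b) \<and> H a (toward a b) + 1 = H a b"
  apply (drule lab_cases, drule lab_cases)
  unfolding H_def hb1_def hb2_def hb3_def cadj toward_def
  by (elim disjE; simp)

lemma away: "a \<in> {1..8} \<Longrightarrow> b \<in> {1..8} \<Longrightarrow> H a b < 3 \<Longrightarrow> cube_adj b (away a b) \<and> H a (away a b) = H a b + 1"
  apply (drule lab_cases, drule lab_cases)
  unfolding H_def hb1_def hb2_def hb3_def cadj away_def
  by (elim disjE; simp)




lemma D_base: "\<not>(a = b \<and> xs \<noteq> [] \<and> ys \<noteq> []) \<Longrightarrow> D (a#xs) (b#ys) = U xs + H a b + U ys"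
  by auto

lemma D_sym: "D x y = D y x"
  by (induction x y rule: D.induct) (auto simp: H_sym)

lemma D_self[simp]: "D x x = 0"
  by (induction x) auto

lemma D_prefix: "x \<noteq> [] \<Longrightarrow> y \<noteq> [] \<Longrightarrow> D (p@x) (p@y) = D x y"
  by (induction p) auto

lemma Lip1: "D u (s@[a]) \<le> D u (s@[b]) + H a b"
proof (induction s arbitrary: u)
  case Nil
  then show ?case
    using H_tri[of _ a b] H_sym by (cases u) (auto simp: H_sym add.commute)
next
  case (Cons s0 ss)
  show ?case
  proof (cases u)
    case Nil then show ?thesis by simp
  next
    case (Cons u0 us)
    have w: "wt a \<le> wt b + H a b" unfolding wt_def using H_tri[of a 1 b] by linarith
    show ?thesis using Cons.IH[of us] w by (auto simp: Cons)
  qed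
qed

lemma Lip2: "x \<noteq> [] \<Longrightarrow> D u (x@[1]) \<le> D u x + 1 \<and> D u x \<le> D u (x@[1]) + 1"
proof (induction u arbitrary: x)
  case Nil then show ?case by simp
next
  case (Cons u0 us)
  then obtain x0 xs where x: "x = x0#xs" by (cases x) auto
  show ?case
  proof (cases "u0 = x0 \<and> us \<noteq> [] \<and> xs \<noteq> []")
    case True
    then show ?thesis using Cons.IH[of xs] x by auto
  next
    case False
    show ?thesis
    proof (cases "u0 = x0 \<and> us \<noteq> []")
      case True
      with False have "xs = []" by auto
      then obtain a as where "us = a#as" using True by (cases us) auto
      then show ?thesis using True x \<open>xs = []\<close> by (auto simp: wt_def H_sym)
    next
      case False
      then show ?thesis using x by auto
    qed
  qed
qed

lemma D_out: "s \<noteq> [] \<Longrightarrow> p \<noteq> [] \<Longrightarrow> \<not>(\<exists>c z. p = s@c#z) \<Longrightarrow> D p (s@[c]) = D p s + wt c + 1"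
proof (induction s arbitrary: p)
  case Nil then show ?case by simp
next
  case (Cons s0 ss)
  obtain p0 ps where p: "p = p0#ps" using Cons.prems by (cases p) auto
  show ?case
  proof (cases "p0 = s0 \<and> ps \<noteq> [] \<and> ss \<noteq> []")
    case True
    have "\<not>(\<exists>c z. ps = ss@c#z)" using Cons.prems(3) p True by auto
    then show ?thesis using Cons.IH[of ps] True p by auto
  next
    case False
    show ?thesis
    proof (cases "p0 = s0 \<and> ss = []")
      case True
      then have "ps = []" using Cons.prems(3) p by (cases ps) auto
      then show ?thesis using p True by auto
    next
      case False
      then show ?thesis using p \<open>\<not> (p0 = s0 \<and> ps \<noteq> [] \<and> ss \<noteq> [])\<close> by auto
    qed
  qed
qed

lemma decomp: "x \<noteq> [] \<Longrightarrow> y \<noteq> [] \<Longrightarrow> \<exists>p a b xs ys. x = p@a#xs \<and> y = p@b#ys \<and> \<not>(a = b \<and> xs \<noteq> [] \<and> ys \<noteq> [])"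
proof (induction x arbitrary: y)
  case Nil then show ?case by simp
next
  case (Cons a xs)
  obtain b ys where y: "y = b#ys" using Cons.prems by (cases y) auto
  show ?case
  proof (cases "a = b \<and> xs \<noteq> [] \<and> ys \<noteq> []")
    case True
    then obtain p a' b' xs' ys' where "xs = p@a'#xs'" "ys = p@b'#ys'" "\<not>(a' = b' \<and> xs' \<noteq> [] \<and> ys' \<noteq> [])"
      using Cons.IH[of ys] by blast
    then show ?thesis using y True by (intro exI[of _ "a#p"]) auto
  next
    case False
    then show ?thesis using y by (intro exI[of _ "[]"]) auto
  qed
qed




definition intok :: "nat list \<Rightarrow> bool" where "intok xs \<longleftrightarrow> (\<forall>x\<in>set (butlast (tl xs)). x \<noteq> 1)"

lemma set_butlast_tl: "x \<in> set (butlast (tl xs)) \<longleftrightarrow> (\<exists>i. 0 < i \<and> Suc i < length xs \<and> xs ! i = x)"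
proof
  assume "x \<in> set (butlast (tl xs))"
  then obtain j where j: "j < length (butlast (tl xs))" "butlast (tl xs) ! j = x" by (auto simp: in_set_conv_nth)
  then show "\<exists>i. 0 < i \<and> Suc i < length xs \<and> xs ! i = x"
    by (intro exI[of _ "Suc j"]) (cases xs, auto simp: nth_butlast)
next
  assume "\<exists>i. 0 < i \<and> Suc i < length xs \<and> xs ! i = x"
  then obtain i where i: "0 < i" "Suc i < length xs" "xs ! i = x" by auto
  then obtain j where "i = Suc j" by (cases i) auto
  then show "x \<in> set (butlast (tl xs))" using i
    by (cases xs) (auto simp: in_set_conv_nth nth_butlast intro!: exI[of _ j])
qed

lemma V_iff: "xs \<in> CCC_V n \<longleftrightarrow> xs \<noteq> [] \<and> length xs \<le> n \<and> set xs \<subseteq> {1..8} \<and> intok xs"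
proof -
  have a: "(\<forall>i. 0 < i \<and> Suc i < length xs \<longrightarrow> xs ! i \<noteq> 1) \<longleftrightarrow> intok xs"
    unfolding intok_def Ball_def set_butlast_tl by blast
  have b: "1 \<le> length xs \<longleftrightarrow> xs \<noteq> []" by (cases xs) auto
  show ?thesis unfolding CCC_V_def using a b by blast
qed

lemma butlast_tl_snoc: "butlast (tl (s @ [y])) = tl s"
  by (cases s) auto

lemma intok_snoc: "intok (s@[y]) \<longleftrightarrow> (\<forall>x\<in>set (tl s). x \<noteq> 1)"
  unfolding intok_def butlast_tl_snoc by simp

lemma cube_move:
  assumes "s@[l] \<in> CCC_V n" "cube_adj l c"
  shows "s@[c] \<in> CCC_V n \<and> CCC_E (s@[l]) (s@[c])"
  using assms cube_adj_range[OF assms(2)] unfolding V_iff intok_snoc CCC_E_def CCC_E0_def by auto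

lemma up_move:
  assumes "s \<noteq> []" "s@[1] \<in> CCC_V n"
  shows "s \<in> CCC_V n \<and> CCC_E (s@[1]) s"
proof -
  have t: "\<forall>x\<in>set (tl s). x \<noteq> 1" using assms unfolding V_iff intok_snoc by auto
  have "intok s" using t unfolding intok_def by (auto dest: in_set_butlastD)
  moreover have "length s = 1 \<or> last s \<noteq> 1"
  proof (cases "length s = 1")
    case False
    then have "last s \<in> set (tl s)" using assms(1)
      by (cases s) (auto)
    then show ?thesis using t by auto
  qed simp
  ultimately show ?thesis using assms unfolding V_iff CCC_E_def CCC_E0_def by auto
qed

lemma down_move:
  assumes "s \<in> CCC_V n" "length s < n" "length s = 1 \<or> last s \<noteq> 1"
  shows "s@[1] \<in> CCC_V n \<and> CCC_E s (s@[1])"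
proof -
  have "\<forall>x\<in>set (tl s). x \<noteq> 1"
  proof (cases "length s = 1")
    case True then show ?thesis by (cases s) auto
  next
    case False
    then have ne: "tl s \<noteq> []" and l: "last s \<noteq> 1" using assms(1,3) unfolding V_iff by (cases s, auto)+
    have "tl s = butlast (tl s) @ [last s]" using ne by (cases s) auto
    then have "set (tl s) = set (butlast (tl s)) \<union> {last s}"
      by (metis empty_set list.simps(15) set_append sup_commute insert_is_Un)
    then show ?thesis using assms(1) l unfolding V_iff intok_def by auto
  qed
  then show ?thesis using assms unfolding V_iff intok_snoc CCC_E_def CCC_E0_def by auto
qed




lemma H1_3: "l \<in> {1..8} \<Longrightarrow> H 1 l = 3 \<Longrightarrow> l = 7"
  by (drule lab_cases) (elim disjE; simp add: H_def hb1_def hb2_def hb3_def)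

lemma D_decomp_val: "D (p@a#us) (p@b#vs) = (if a = b \<and> us \<noteq> [] \<and> vs \<noteq> [] then D us vs else U us + H a b + U vs)"
  using D_prefix[of "a#us" "b#vs" p] by simp

lemma D_dec: "\<not>(a = b \<and> us \<noteq> [] \<and> vs \<noteq> []) \<Longrightarrow> D (p@a#us) (p@b#vs) = U us + H a b + U vs"
  by (rule trans[OF D_decomp_val if_not_P])

lemma V_set: "xs \<in> CCC_V n \<Longrightarrow> x \<in> set xs \<Longrightarrow> x \<in> {1..8}"
  unfolding V_iff by auto

lemma descent:
  assumes u: "u \<in> CCC_V n" and v: "v \<in> CCC_V n" and uv: "u \<noteq> v"
  shows "\<exists>y\<in>CCC_V n. CCC_E v y \<and> D u y + 1 = D u v"
proof -
  have ne: "u \<noteq> []" "v \<noteq> []" using u v unfolding V_iff by auto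
  obtain p a b us vs where dec: "u = p@a#us" "v = p@b#vs" and C: "\<not>(a = b \<and> us \<noteq> [] \<and> vs \<noteq> [])"
    using decomp[OF ne] by blast
  have Duv: "D u v = U us + H a b + U vs" using D_dec[OF C] dec by simp
  show ?thesis
  proof (cases "vs = []")
    case False
    define s where "s = p@b#butlast vs"
    have vs: "v = s@[last vs]" unfolding s_def dec using False by simp
    have Uvs: "U vs = U (butlast vs) + wt (last vs) + 1"
    proof -
      have "U vs = U (butlast vs @ [last vs])" using False by simp
      then show ?thesis by simp
    qed
    show ?thesis
    proof (cases "last vs = 1")
      case False
      have lr: "last vs \<in> {1..8}" using v vs V_set by auto
      define c where "c = toward 1 (last vs)"
      have c: "cube_adj (last vs) c" "wt c + 1 = wt (last vs)"
        using toward[of 1 "last vs"] lr False unfolding c_def wt_def by (auto simp: H_sym)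
      have mv: "s@[c] \<in> CCC_V n \<and> CCC_E v (s@[c])" using cube_move[of s "last vs" n c] v vs c by simp
      have "D u (s@[c]) = U us + H a b + U (butlast vs @ [c])"
        unfolding s_def dec using D_dec[of a b us "butlast vs @ [c]" p] C \<open>vs \<noteq> []\<close> by auto
      then show ?thesis using mv Duv Uvs c by (intro bexI[of _ "s@[c]"]) auto
    next
      case True
      have sne: "s \<noteq> []" unfolding s_def by simp
      have mv: "s \<in> CCC_V n \<and> CCC_E v s" using up_move[of s n] sne v vs True
        by (metis CCC_E_def)
      have "D u s = U us + H a b + U (butlast vs)"
        unfolding s_def dec using D_dec[of a b us "butlast vs" p] C \<open>vs \<noteq> []\<close> by auto
      then show ?thesis using mv Duv Uvs True by (intro bexI[of _ s]) auto
    qed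
  next
    case True
    show ?thesis
    proof (cases "a = b")
      case False
      have ab: "a \<in> {1..8}" "b \<in> {1..8}" using u v dec V_set by auto
      define c where "c = toward a b"
      have c: "cube_adj b c" "H a c + 1 = H a b" using toward[of a b] ab False unfolding c_def by auto
      have mv: "p@[c] \<in> CCC_V n \<and> CCC_E v (p@[c])" using cube_move[of p b n c] v dec True c by simp
      have "D u (p@[c]) = U us + H a c"
        unfolding dec using D_decomp_val[of p a us c "[]"] by simp
      then show ?thesis using mv Duv True c by (intro bexI[of _ "p@[c]"]) auto
    next
      case ab: True
      have usne: "us \<noteq> []" using uv dec True ab by auto
      then obtain h t where ht: "us = h#t" by (cases us) auto
      have len: "length v < n" using u v dec ht \<open>vs = []\<close> unfolding V_iff by auto
      have l1: "length v = 1 \<or> last v \<noteq> 1"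
      proof (cases "p = []")
        case True then show ?thesis using dec \<open>vs = []\<close> by simp
      next
        case False
        have "b \<in> set (butlast (tl u))" using False dec ht ab by (cases p) (auto simp: butlast_append)
        then show ?thesis using u dec \<open>vs = []\<close> unfolding V_iff intok_def by auto
      qed
      have mv: "v@[1] \<in> CCC_V n \<and> CCC_E v (v@[1])" using down_move[OF v len l1] .
      have "D u (v@[1]) = D us [1]" unfolding dec using True ab usne D_decomp_val[of p a us b "[1]"] by simp
      also have "\<dots> = U t + H h 1" using ht by simp
      finally show ?thesis using mv Duv True ab ht by (intro bexI[of _ "v@[1]"]) (auto simp: wt_def)
    qed
  qed
qed

lemma Lip_E0: "CCC_E0 x y \<Longrightarrow> D u y \<le> D u x + 1 \<and> D u x \<le> D u y + 1"
  unfolding CCC_E0_def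
proof (erule disjE; elim conjE)
  assume a: "x \<noteq> []" "y \<noteq> []" "butlast x = butlast y" "cube_adj (last x) (last y)"
  have x: "x = butlast x @ [last x]" using a(1) by simp
  have y: "y = butlast x @ [last y]" using a(2,3) by simp
  have h: "H (last x) (last y) = 1" "H (last y) (last x) = 1" using cube_adj_H a(4) H_sym by auto
  show ?thesis using Lip1[of u "butlast x" "last x" "last y"] Lip1[of u "butlast x" "last y" "last x"] h
    x y by (metis)
next
  assume "x \<noteq> []" "y = x @ [1]"
  then show ?thesis using Lip2 by blast
qed

lemma Lip: "CCC_E x y \<Longrightarrow> D u y \<le> D u x + 1"
  unfolding CCC_E_def using Lip_E0 by blast

lemma H_x7: "x \<in> {1..8} \<Longrightarrow> H x 7 = 3 \<Longrightarrow> x = 1"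
  by (drule lab_cases) (elim disjE; simp add: H_def hb1_def hb2_def hb3_def)

lemma ascent:
  assumes n2: "n \<ge> 2" and u: "u \<in> CCC_V n" and v: "v \<in> CCC_V n" and uv: "u \<noteq> v"
    and nm: "\<not>(length u = n \<and> (last u = 7 \<or> (butlast u = butlast v \<and> H (last u) (last v) = 3 \<and> last u \<noteq> 1)))"
  shows "\<exists>u'\<in>CCC_V n. CCC_E u u' \<and> D v u' = D v u + 1"
proof -
  have ne: "v \<noteq> []" "u \<noteq> []" using u v unfolding V_iff by auto
  obtain p a b vs us where dec: "v = p@a#vs" "u = p@b#us" and C: "\<not>(a = b \<and> vs \<noteq> [] \<and> us \<noteq> [])"
    using decomp[OF ne] by blast
  have Dvu: "D v u = U vs + H a b + U us" using D_dec[OF C] dec by simp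
  have lenu: "length u \<le> n" using u unfolding V_iff by auto
  show ?thesis
  proof (cases "us = []")
    case False
    define s where "s = p@b#butlast us"
    have us: "u = s@[last us]" unfolding s_def dec using False by simp
    have Uus: "U us = U (butlast us) + wt (last us) + 1"
    proof -
      have "U us = U (butlast us @ [last us])" using False by simp
      then show ?thesis by simp
    qed
    show ?thesis
    proof (cases "last us = 7")
      case False
      have lr: "last us \<in> {1..8}" using u us V_set by auto
      have h3: "H 1 (last us) < 3" using H1_3[OF lr] False H_le3[of 1 "last us"] by linarith
      define c where "c = away 1 (last us)"
      have c: "cube_adj (last us) c" "wt c = wt (last us) + 1"
        using away[of 1 "last us"] lr h3 unfolding c_def wt_def by (auto simp: H_sym)
      have mv: "s@[c] \<in> CCC_V n \<and> CCC_E u (s@[c])" using cube_move[of s "last us" n c] u us c by simp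
      have "D v (s@[c]) = U vs + H a b + U (butlast us @ [c])"
        unfolding s_def dec using D_dec[of a b vs "butlast us @ [c]" p] C \<open>us \<noteq> []\<close> by auto
      then show ?thesis using mv Dvu Uus c by (intro bexI[of _ "s@[c]"]) auto
    next
      case True
      have lt: "length u < n" using nm True lenu us by auto
      have l1: "length u = 1 \<or> last u \<noteq> 1" using True us by simp
      have mv: "u@[1] \<in> CCC_V n \<and> CCC_E u (u@[1])" using down_move[OF u lt l1] .
      have "D v (u@[1]) = U vs + H a b + U (us @ [1])"
        unfolding dec using D_dec[of a b vs "us @ [1]" p] C \<open>us \<noteq> []\<close> by auto
      then show ?thesis using mv Dvu by (intro bexI[of _ "u@[1]"]) auto
    qed
  next
    case True
    have ab: "a \<in> {1..8}" "b \<in> {1..8}" using u v dec V_set by auto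
    show ?thesis
    proof (cases "H a b < 3")
      case True
      define c where "c = away a b"
      have c: "cube_adj b c" "H a c = H a b + 1" using away[of a b] ab True unfolding c_def by auto
      have mv: "p@[c] \<in> CCC_V n \<and> CCC_E u (p@[c])" using cube_move[of p b n c] u dec \<open>us = []\<close> c by simp
      have "D v (p@[c]) = U vs + H a c"
        unfolding dec using D_dec[of a c vs "[]" p] by simp
      then show ?thesis using mv Dvu \<open>us = []\<close> c by (intro bexI[of _ "p@[c]"]) auto
    next
      case False
      then have h3: "H a b = 3" using H_le3[of a b] by linarith
      then have anb: "a \<noteq> b" by auto
      show ?thesis
      proof (cases "b = 1 \<and> p \<noteq> []")
        case True
        have mv: "p \<in> CCC_V n \<and> CCC_E u p" using up_move[of p n] True u dec \<open>us = []\<close>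
          by (metis CCC_E_def)
        obtain p' z where pz: "p = p'@[z]" using True by (metis append_butlast_last_id)
        have "D v p = D (z#a#vs) [z]" unfolding dec pz using D_prefix[of "z#a#vs" "[z]" p'] by simp
        also have "\<dots> = wt a + 1 + U vs" by simp
        finally have "D v p = D v u + 1" using Dvu \<open>us = []\<close> h3 True unfolding wt_def by simp
        then show ?thesis using mv by blast
      next
        case False
        show ?thesis
        proof (cases "length u < n")
          case True
          have l1: "length u = 1 \<or> last u \<noteq> 1" using False dec \<open>us = []\<close> by auto
          have mv: "u@[1] \<in> CCC_V n \<and> CCC_E u (u@[1])" using down_move[OF u True l1] .
          have "D v (u@[1]) = U vs + H a b + U [1]"
            unfolding dec \<open>us = []\<close> using D_dec[of a b vs "[1]" p] anb by auto
          then show ?thesis using mv Dvu \<open>us = []\<close> by (intro bexI[of _ "u@[1]"]) auto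
        next
          case lt: False
          have len: "length u = n" using lt lenu by simp
          have pne: "p \<noteq> []" using len n2 dec \<open>us = []\<close> by auto
          have b1: "b \<noteq> 1" using False pne by auto
          have "length v \<le> n" using v unfolding V_iff by auto
          then have "vs = []" using len dec \<open>us = []\<close> by auto
          then have "butlast u = butlast v \<and> H (last u) (last v) = 3 \<and> last u \<noteq> 1"
            using dec \<open>us = []\<close> h3 b1 H_sym by auto
          then show ?thesis using nm len by blast
        qed
      qed
    qed
  qed
qed




lemma D_pos: "u \<in> CCC_V n \<Longrightarrow> v \<in> CCC_V n \<Longrightarrow> u \<noteq> v \<Longrightarrow> D u v > 0"
  using descent[of u n v] by auto

lemma D_zero: "u \<in> CCC_V n \<Longrightarrow> v \<in> CCC_V n \<Longrightarrow> D u v = 0 \<Longrightarrow> u = v"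
  using D_pos by fastforce

lemma E_sym: "CCC_E x y \<Longrightarrow> CCC_E y x"
  unfolding CCC_E_def by blast

lemma tri_aux: "\<forall>z\<in>CCC_V n. D y z = k \<longrightarrow> D x z \<le> D x y + D y z"
  if yV: "y \<in> CCC_V n" for k
proof (induction k)
  case 0
  then show ?case using D_zero[OF yV] by auto
next
  case (Suc k)
  show ?case
  proof (intro ballI impI)
    fix z assume z: "z \<in> CCC_V n" "D y z = Suc k"
    then have "y \<noteq> z" by auto
    then obtain z' where z': "z' \<in> CCC_V n" "CCC_E z z'" "D y z' + 1 = D y z"
      using descent[OF yV z(1)] by blast
    have "D x z' \<le> D x y + D y z'" using Suc z' z by auto
    moreover have "D x z \<le> D x z' + 1" using Lip[OF E_sym[OF z'(2)]] .
    ultimately show "D x z \<le> D x y + D y z" using z' by linarith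
  qed
qed

lemma tri: "y \<in> CCC_V n \<Longrightarrow> z \<in> CCC_V n \<Longrightarrow> D x z \<le> D x y + D y z"
  using tri_aux by blast

lemma is_walk_snoc: "xs \<noteq> [] \<Longrightarrow> is_walk E V (xs@[y]) \<longleftrightarrow> is_walk E V xs \<and> y \<in> V \<and> E (last xs) y"
  unfolding is_walk_def
proof (intro iffI conjI; (elim conjE)?)
  assume ne: "xs \<noteq> []" and a: "xs @ [y] \<noteq> []" "set (xs @ [y]) \<subseteq> V"
     "\<forall>i. Suc i < length (xs @ [y]) \<longrightarrow> E ((xs @ [y]) ! i) ((xs @ [y]) ! Suc i)"
  show "xs \<noteq> []" by fact
  show "set xs \<subseteq> V" using a by auto
  show "y \<in> V" using a by auto
  show "\<forall>i. Suc i < length xs \<longrightarrow> E (xs ! i) (xs ! Suc i)"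
  proof (intro allI impI)
    fix i assume "Suc i < length xs"
    then show "E (xs ! i) (xs ! Suc i)" using a(3)[rule_format, of i] by (auto simp: nth_append)
  qed
  show "E (last xs) y" using a(3)[rule_format, of "length xs - 1"] ne
    by (auto simp: nth_append last_conv_nth)
next
  assume ne: "xs \<noteq> []" and a: "xs \<noteq> []" "set xs \<subseteq> V"
     "\<forall>i. Suc i < length xs \<longrightarrow> E (xs ! i) (xs ! Suc i)" "y \<in> V" "E (last xs) y"
  show "xs @ [y] \<noteq> []" by simp
  show "set (xs @ [y]) \<subseteq> V" using a by auto
  show "\<forall>i. Suc i < length (xs @ [y]) \<longrightarrow> E ((xs @ [y]) ! i) ((xs @ [y]) ! Suc i)"
  proof (intro allI impI)
    fix i assume i: "Suc i < length (xs @ [y])"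
    show "E ((xs @ [y]) ! i) ((xs @ [y]) ! Suc i)"
    proof (cases "Suc i < length xs")
      case True then show ?thesis using a(3) by (auto simp: nth_append)
    next
      case False
      then have "i = length xs - 1" using i by simp
      then show ?thesis using a(5) ne by (auto simp: nth_append last_conv_nth)
    qed
  qed
qed

lemma walk_exists: "u \<in> CCC_V n \<Longrightarrow> \<forall>v\<in>CCC_V n. D u v = k \<longrightarrow>
   (\<exists>xs. is_walk CCC_E (CCC_V n) xs \<and> hd xs = u \<and> last xs = v \<and> length xs = Suc k)"
proof (induction k)
  case 0
  show ?case
  proof (intro ballI impI)
    fix v assume "v \<in> CCC_V n" "D u v = 0"
    then have "v = u" using D_zero[OF 0] by auto
    then show "\<exists>xs. is_walk CCC_E (CCC_V n) xs \<and> hd xs = u \<and> last xs = v \<and> length xs = Suc 0"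
      using 0 by (intro exI[of _ "[u]"]) (auto simp: is_walk_def)
  qed
next
  case (Suc k)
  show ?case
  proof (intro ballI impI)
    fix v assume v: "v \<in> CCC_V n" "D u v = Suc k"
    then have "u \<noteq> v" by auto
    then obtain y where y: "y \<in> CCC_V n" "CCC_E v y" "D u y + 1 = D u v"
      using descent[OF Suc.prems v(1)] by blast
    then obtain xs where xs: "is_walk CCC_E (CCC_V n) xs" "hd xs = u" "last xs = y" "length xs = Suc k"
      using Suc v by auto
    have ne: "xs \<noteq> []" using xs(4) by auto
    have "is_walk CCC_E (CCC_V n) (xs@[v])" using is_walk_snoc[OF ne] xs v y E_sym by auto
    then show "\<exists>xs. is_walk CCC_E (CCC_V n) xs \<and> hd xs = u \<and> last xs = v \<and> length xs = Suc (Suc k)"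
      using xs ne by (intro exI[of _ "xs@[v]"]) auto
  qed
qed

lemma walk_lower: "is_walk CCC_E V xs \<Longrightarrow> D (hd xs) (last xs) \<le> length xs - 1"
proof (induction xs rule: rev_induct)
  case Nil then show ?case by (simp add: is_walk_def)
next
  case (snoc y xs)
  show ?case
  proof (cases "xs = []")
    case True then show ?thesis by simp
  next
    case False
    have w: "is_walk CCC_E V xs" "CCC_E (last xs) y" using is_walk_snoc[OF False] snoc.prems by auto
    have "D (hd xs) (last xs) \<le> length xs - 1" using snoc.IH w by simp
    moreover have "D (hd xs) y \<le> D (hd xs) (last xs) + 1" using Lip[OF w(2)] .
    moreover have "length xs > 0" using False by simp
    ultimately have "D (hd xs) y \<le> length xs" by linarith
    then show ?thesis using False by simp
  qed
qed

lemma gdist_D: "u \<in> CCC_V n \<Longrightarrow> v \<in> CCC_V n \<Longrightarrow> gdist (CCC_V n) CCC_E u v = D u v"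
  unfolding gdist_def
proof (rule Least_equality)
  assume u: "u \<in> CCC_V n" and v: "v \<in> CCC_V n"
  show "\<exists>xs. is_walk CCC_E (CCC_V n) xs \<and> hd xs = u \<and> last xs = v \<and> length xs = Suc (D u v)"
    using walk_exists[OF u, of "D u v"] v by blast
  fix k assume "\<exists>xs. is_walk CCC_E (CCC_V n) xs \<and> hd xs = u \<and> last xs = v \<and> length xs = Suc k"
  then obtain xs where "is_walk CCC_E (CCC_V n) xs" "hd xs = u" "last xs = v" "length xs = Suc k" by blast
  then show "D u v \<le> k" using walk_lower[of "CCC_V n" xs] by auto
qed

lemma interval_D: "x \<in> CCC_V n \<Longrightarrow> y \<in> CCC_V n \<Longrightarrow> w \<in> CCC_V n \<Longrightarrow>
   x \<in> interval (CCC_V n) CCC_E y w \<longleftrightarrow> D y x + D x w = D y w"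
  unfolding interval_def using gdist_D by auto




definition SS :: "nat \<Rightarrow> nat list set" where
  "SS n = {s. length s = n - 1 \<and> s \<noteq> [] \<and> set s \<subseteq> {1..8} \<and> (\<forall>x\<in>set (tl s). x \<noteq> 1)}"

lemma SS_eq: assumes "n \<ge> 2"
  shows "SS n = (\<lambda>(r,cs). r#cs) ` ({1..8} \<times> {cs. set cs \<subseteq> {2..8} \<and> length cs = n - 2})"
proof (rule set_eqI)
  fix s
  show "s \<in> SS n \<longleftrightarrow> s \<in> (\<lambda>(r,cs). r#cs) ` ({1..8} \<times> {cs. set cs \<subseteq> {2..8} \<and> length cs = n - 2})"
  proof
    assume "s \<in> SS n"
    then obtain r cs where s: "s = r#cs" and p: "length cs = n - 2" "r \<in> {1..8}" "set cs \<subseteq> {1..8}" "\<forall>x\<in>set cs. x \<noteq> 1"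
      unfolding SS_def by (cases s) auto
    have "set cs \<subseteq> {2..8}" using p(3,4) by fastforce
    then show "s \<in> (\<lambda>(r,cs). r#cs) ` ({1..8} \<times> {cs. set cs \<subseteq> {2..8} \<and> length cs = n - 2})"
      using s p by (auto intro!: image_eqI[of _ _ "(r,cs)"])
  next
    assume "s \<in> (\<lambda>(r,cs). r#cs) ` ({1..8} \<times> {cs. set cs \<subseteq> {2..8} \<and> length cs = n - 2})"
    then obtain r cs where s: "s = r#cs" "r \<in> {1..8}" "set cs \<subseteq> {2..8}" "length cs = n - 2" by auto
    then show "s \<in> SS n" unfolding SS_def using assms by auto
  qed
qed

lemma card_SS: assumes "n \<ge> 2" shows "card (SS n) = 8 * 7 ^ (n - 2)"
proof -
  have inj: "inj_on (\<lambda>(r,cs). r#cs) ({1..8::nat} \<times> {cs. set cs \<subseteq> {2..8::nat} \<and> length cs = n - 2})"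
    unfolding inj_on_def by auto
  have "card (SS n) = card ({1..8::nat} \<times> {cs. set cs \<subseteq> {2..8::nat} \<and> length cs = n - 2})"
    unfolding SS_eq[OF assms] using card_image[OF inj] .
  also have "\<dots> = 8 * 7 ^ (n - 2)"
    by (simp add: card_cartesian_product card_lists_length_eq)
  finally show ?thesis .
qed

lemma finite_SS: "finite (SS n)"
proof -
  have "SS n \<subseteq> {xs. set xs \<subseteq> {1..8} \<and> length xs = n - 1}" unfolding SS_def by auto
  then show ?thesis using finite_lists_length_eq[of "{1..8::nat}"] finite_subset by blast
qed

lemma finite_V: "finite (CCC_V n)"
proof -
  have "CCC_V n \<subseteq> {xs. set xs \<subseteq> {1..8} \<and> length xs \<le> n}" by (intro subsetI) (simp add: V_iff)
  then show ?thesis using finite_lists_length_le[of "{1..8::nat}"] finite_subset by blast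
qed

lemma snoc_V: "n \<ge> 2 \<Longrightarrow> s \<in> SS n \<Longrightarrow> a \<in> {1..8} \<Longrightarrow> s@[a] \<in> CCC_V n"
  unfolding V_iff intok_snoc SS_def by auto

lemma leaf_split: "n \<ge> 2 \<Longrightarrow> v \<in> CCC_V n \<Longrightarrow> length v = n \<Longrightarrow> butlast v \<in> SS n \<and> last v \<in> {1..8} \<and> v = butlast v @ [last v]"
proof -
  assume n: "n \<ge> 2" and v: "v \<in> CCC_V n" and l: "length v = n"
  have ne: "v \<noteq> []" using v unfolding V_iff by auto
  have e: "v = butlast v @ [last v]" using ne by simp
  have "butlast v @ [last v] \<in> CCC_V n" using v e by simp
  then have "set (butlast v) \<subseteq> {1..8} \<and> last v \<in> {1..8} \<and> (\<forall>x\<in>set (tl (butlast v)). x \<noteq> 1)"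
    unfolding V_iff intok_snoc by auto
  moreover have lb: "length (butlast v) = n - 1" using l by simp
  moreover have "butlast v \<noteq> []"
  proof
    assume "butlast v = []"
    then have "length (butlast v) = 0" by simp
    with lb n show False by simp
  qed
  ultimately show ?thesis unfolding SS_def using e by auto
qed




definition maxd :: "nat \<Rightarrow> nat list \<Rightarrow> nat list \<Rightarrow> bool" where
  "maxd n p q \<longleftrightarrow> (\<forall>y\<in>CCC_V n. CCC_E q y \<longrightarrow> D p y \<le> D p q)"

lemma only_res:
  assumes p: "p \<in> CCC_V n" and q: "q \<in> CCC_V n" and w: "w \<in> CCC_V n" and m: "maxd n p q" and wq: "w \<noteq> q"
  shows "D p q + D q w \<noteq> D p w"
proof
  assume eq: "D p q + D q w = D p w"
  obtain y where y: "y \<in> CCC_V n" "CCC_E q y" "D w y + 1 = D w q"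
    using descent[OF w q wq] by blast
  have "D p w \<le> D p y + D y w" using tri[OF y(1) w] .
  moreover have "D p y \<le> D p q" using m y unfolding maxd_def by auto
  moreover have "D y w = D w y" "D q w = D w q" using D_sym by auto
  ultimately show False using eq y(3) by linarith
qed

lemma pair_res:
  assumes p: "p \<in> CCC_V n" and q: "q \<in> CCC_V n" and w: "w \<in> CCC_V n"
    and m1: "maxd n p q" and m2: "maxd n q p" and r: "strongly_resolves (CCC_V n) CCC_E w p q"
  shows "w = p \<or> w = q"
proof (rule ccontr)
  assume "\<not>(w = p \<or> w = q)"
  then have "w \<noteq> p" "w \<noteq> q" by auto
  then show False using r only_res[OF p q w m1] only_res[OF q p w m2]
    unfolding strongly_resolves_def using interval_D[OF q p w] interval_D[OF p q w] by auto
qed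

lemma leaf_nbr:
  assumes q: "q \<in> CCC_V n" "length q = n" "last q \<noteq> 1" and y: "y \<in> CCC_V n" "CCC_E q y"
  shows "y = butlast q @ [last y] \<and> cube_adj (last q) (last y)"
proof -
  have ly: "length y \<le> n" using y unfolding V_iff by auto
  from y(2) consider (a) "CCC_E0 q y" | (b) "CCC_E0 y q" unfolding CCC_E_def by blast
  then show ?thesis
  proof cases
    case a
    have "\<not>(y = q@[1])" using ly q(2) by auto
    with a have t: "y \<noteq> [] \<and> butlast q = butlast y \<and> cube_adj (last q) (last y)" unfolding CCC_E0_def by blast
    then have "y = butlast y @ [last y]" by (intro append_butlast_last_id[symmetric]) blast
    with t show ?thesis by simp
  next
    case b
    have "\<not>(q = y@[1])" using q(3) by auto
    with b have t: "y \<noteq> [] \<and> butlast y = butlast q \<and> cube_adj (last y) (last q)" unfolding CCC_E0_def by blast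
    then have "y = butlast y @ [last y]" by (intro append_butlast_last_id[symmetric]) blast
    with t cube_adj_sym show ?thesis by simp
  qed
qed

lemma wt7: "wt 7 = 3" by (simp add: wt_def H_def hb1_def hb2_def hb3_def)

lemma maxd_anti:
  assumes n: "n \<ge> 2" and s: "s \<in> SS n" and ab: "a \<in> {1..8}" "b \<in> {1..8}" "H a b = 3" "b \<noteq> 1"
  shows "maxd n (s@[a]) (s@[b])"
  unfolding maxd_def
proof (intro ballI impI)
  fix y assume y: "y \<in> CCC_V n" "CCC_E (s@[b]) y"
  have sl: "length s = n - 1" using s unfolding SS_def by auto
  have "s@[b] \<in> CCC_V n" using snoc_V[OF n s ab(2)] .
  then have "y = s @ [last y]" using leaf_nbr[of "s@[b]" n y] y ab sl n by auto
  then have "D (s@[a]) y = D (s@[a]) (s@[last y])" by (rule arg_cong)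
  also have "\<dots> = H a (last y)" using D_prefix[of "[a]" "[last y]" s] by simp
  finally have "D (s@[a]) y = H a (last y)" .
  moreover have "D (s@[a]) (s@[b]) = H a b" using D_prefix[of "[a]" "[b]" s] by simp
  ultimately show "D (s@[a]) y \<le> D (s@[a]) (s@[b])" using ab H_le3 by simp
qed

lemma maxd_77:
  assumes n: "n \<ge> 2" and s: "s \<in> SS n" "s' \<in> SS n" "s \<noteq> s'"
  shows "maxd n (s@[7]) (s'@[7])"
  unfolding maxd_def
proof (intro ballI impI)
  fix y assume y: "y \<in> CCC_V n" "CCC_E (s'@[7]) y"
  have sl: "length s = n - 1" "length s' = n - 1" "s' \<noteq> []" using s unfolding SS_def by auto
  have "s'@[7] \<in> CCC_V n" using snoc_V[OF n s(2)] by simp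
  then have yy: "y = s' @ [last y]" using leaf_nbr[of "s'@[7]" n y] y sl n by auto
  have nz: "\<not>(\<exists>c z. s@[7] = s'@c#z)"
  proof
    assume "\<exists>c z. s@[7] = s'@c#z"
    then obtain c z where e: "s@[7] = s'@c#z" by blast
    then have "length (s@[7]) = length (s'@c#z)" by simp
    then have "length z = 0" using sl by simp
    then show False using e s(3) by simp
  qed
  have "D (s@[7]) y = D (s@[7]) (s' @ [last y])" using yy by (rule arg_cong)
  also have "\<dots> = D (s@[7]) s' + wt (last y) + 1" using D_out[OF sl(3) _ nz] by simp
  finally have "D (s@[7]) y = D (s@[7]) s' + wt (last y) + 1" .
  moreover have "D (s@[7]) (s'@[7]) = D (s@[7]) s' + wt 7 + 1" using D_out[OF sl(3) _ nz] by simp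
  ultimately show "D (s@[7]) y \<le> D (s@[7]) (s'@[7])" using wt7 wt_le3[of "last y"] by simp
qed

definition ant :: "nat \<Rightarrow> nat" where "ant a = (if a = 2 then 8 else if a = 3 then 5 else 6)"

lemma ant_facts: "a \<in> {2,3,4} \<Longrightarrow> H a (ant a) = 3 \<and> H (ant a) a = 3 \<and> ant a \<in> {1..8} \<and> ant a \<noteq> 1 \<and> a \<noteq> 1
   \<and> a \<in> {1..8} \<and> ant a \<noteq> 7 \<and> ant a \<noteq> 2 \<and> ant a \<noteq> 3 \<and> ant a \<noteq> 4"
  by (auto simp: ant_def H_def hb1_def hb2_def hb3_def)

definition backf :: "nat \<Rightarrow> nat" where
  "backf c = (if c \<in> {2,3,4} then c else if c = 8 then 2 else if c = 5 then 3 else 4)"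

lemma lower:
  assumes n: "n \<ge> 2" and R: "strong_resolving_set (CCC_V n) CCC_E R"
  shows "4 * card (SS n) - 1 \<le> card R"
proof -
  have RV: "R \<subseteq> CCC_V n" and res: "\<And>u v. u \<in> CCC_V n \<Longrightarrow> v \<in> CCC_V n \<Longrightarrow> u \<noteq> v \<Longrightarrow> \<exists>w\<in>R. strongly_resolves (CCC_V n) CCC_E w u v"
    using R unfolding strong_resolving_set_def by auto
  have fR: "finite R" using RV finite_V finite_subset by blast
  define X where "X = SS n \<times> {2::nat,3,4}"
  have pairs: "s@[a] \<in> R \<or> s@[ant a] \<in> R" if sa: "(s,a) \<in> X" for s a
  proof -
    have s: "s \<in> SS n" and a: "a \<in> {2,3,4}" using sa unfolding X_def by auto
    note af = ant_facts[OF a]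
    have V1: "s@[a] \<in> CCC_V n" using snoc_V[OF n s] af by auto
    have V2: "s@[ant a] \<in> CCC_V n" using snoc_V[OF n s] af by auto
    have ne: "s@[a] \<noteq> s@[ant a]" using af a by auto
    obtain w where w: "w \<in> R" "strongly_resolves (CCC_V n) CCC_E w (s@[a]) (s@[ant a])"
      using res[OF V1 V2 ne] by blast
    have m1: "maxd n (s@[a]) (s@[ant a])" using maxd_anti[OF n s, of a "ant a"] af by auto
    have m2: "maxd n (s@[ant a]) (s@[a])" using maxd_anti[OF n s, of "ant a" a] af by auto
    have "w = s@[a] \<or> w = s@[ant a]" using pair_res[OF V1 V2 _ m1 m2 w(2)] w(1) RV by auto
    then show ?thesis using w(1) by auto
  qed
  define g where "g = (\<lambda>(s,a). if s@[a] \<in> R then s@[a] else s@[ant a])"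
  have gR: "g ` X \<subseteq> R" unfolding g_def using pairs by fastforce
  have ginj: "inj_on g X"
  proof (rule inj_onI)
    fix x y assume x: "x \<in> X" and y: "y \<in> X" and e: "g x = g y"
    obtain s a where xa: "x = (s,a)" by (cases x)
    obtain s' a' where ya: "y = (s',a')" by (cases y)
    have a: "a \<in> {2,3,4}" "a' \<in> {2,3,4}" using x y xa ya unfolding X_def by auto
    have e1: "butlast (g x) = s" "butlast (g y) = s'" unfolding g_def xa ya by auto
    have e2: "last (g x) = (if s@[a] \<in> R then a else ant a)" "last (g y) = (if s'@[a'] \<in> R then a' else ant a')"
      unfolding g_def xa ya by auto
    have ss: "s = s'" using e e1 by metis
    have bk: "backf (if P then b else ant b) = b" if "b \<in> {2,3,4}" for P b
      using that by (cases P) (auto simp: backf_def ant_def)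
    have "a = backf (last (g x))" using bk[OF a(1)] e2 by simp
    also have "\<dots> = backf (last (g y))" using e by simp
    also have "\<dots> = a'" using bk[OF a(2)] e2 by simp
    finally have "a = a'" .
    moreover
    ultimately show "x = y" using xa ya ss by simp
  qed
  define L7 where "L7 = (\<lambda>s. s@[7::nat]) ` SS n"
  have cL7: "card L7 = card (SS n)" unfolding L7_def by (rule card_image) (auto simp: inj_on_def)
  have fL7: "finite L7" unfolding L7_def using finite_SS by simp
  have disj: "g ` X \<inter> L7 = {}"
  proof -
    have "last (g x) \<noteq> 7" if "x \<in> X" for x
    proof -
      obtain s a where xa: "x = (s,a)" by (cases x)
      have a: "a \<in> {2,3,4}" using that xa unfolding X_def by auto
      have "last (g x) = (if s@[a] \<in> R then a else ant a)" unfolding g_def xa by auto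
      then show ?thesis using ant_facts[OF a] a by auto
    qed
    then show ?thesis unfolding L7_def by fastforce
  qed
  have cX: "card (g ` X) = 3 * card (SS n)"
    using card_image[OF ginj] unfolding X_def by (simp add: card_cartesian_product)
  have L7R: "card (L7 - R) \<le> Suc 0"
  proof (subst card_le_Suc0_iff_eq)
    show "finite (L7 - R)" using fL7 by simp
    show "\<forall>a1\<in>L7 - R. \<forall>a2\<in>L7 - R. a1 = a2"
    proof (intro ballI, rule ccontr)
      fix x y assume x: "x \<in> L7 - R" and y: "y \<in> L7 - R" and xy: "x \<noteq> y"
      obtain s where s: "s \<in> SS n" "x = s@[7]" using x unfolding L7_def by auto
      obtain s' where s': "s' \<in> SS n" "y = s'@[7]" using y unfolding L7_def by auto
      have ss: "s \<noteq> s'" using xy s s' by auto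
      have V1: "x \<in> CCC_V n" "y \<in> CCC_V n" using snoc_V[OF n] s s' by auto
      obtain w where w: "w \<in> R" "strongly_resolves (CCC_V n) CCC_E w x y"
        using res[OF V1 xy] by blast
      have m1: "maxd n x y" using maxd_77[OF n s(1) s'(1) ss] s s' by simp
      have m2: "maxd n y x" using maxd_77[OF n s'(1) s(1)] ss s s' by simp
      have "w = x \<or> w = y" using pair_res[OF V1 _ m1 m2 w(2)] w(1) RV by auto
      then show False using w(1) x y by auto
    qed
  qed
  have "card L7 = card (L7 \<inter> R) + card (L7 - R)"
    using card_Int_Diff[OF fL7] .
  then have c1: "card (SS n) \<le> card (L7 \<inter> R) + 1" using cL7 L7R by linarith
  have "card (g ` X \<union> (L7 \<inter> R)) = card (g ` X) + card (L7 \<inter> R)"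
    using card_Un_disjoint[of "g ` X" "L7 \<inter> R"] fR gR disj finite_subset by blast
  moreover have "card (g ` X \<union> (L7 \<inter> R)) \<le> card R" using gR fR by (intro card_mono) auto
  ultimately show ?thesis using cX c1 by linarith
qed




definition z0 :: "nat \<Rightarrow> nat list" where "z0 n = (1 # replicate (n - 2) 2) @ [7]"

definition R0 :: "nat \<Rightarrow> nat list set" where
  "R0 n = (\<lambda>(s,a). s@[a]) ` (SS n \<times> {2,3,4,7}) - {z0 n}"

lemma s0_SS: "n \<ge> 2 \<Longrightarrow> 1 # replicate (n - 2) 2 \<in> SS n"
  unfolding SS_def by auto

lemma card_R0: assumes n: "n \<ge> 2" shows "card (R0 n) = 4 * card (SS n) - 1"
proof -
  have inj: "inj_on (\<lambda>(s,a). s@[a]) (SS n \<times> {2::nat,3,4,7})" unfolding inj_on_def by auto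
  have c: "card ((\<lambda>(s,a). s@[a]) ` (SS n \<times> {2::nat,3,4,7})) = 4 * card (SS n)"
    using card_image[OF inj] by (simp add: card_cartesian_product)
  have "z0 n \<in> (\<lambda>(s,a). s@[a]) ` (SS n \<times> {2::nat,3,4,7})"
    unfolding z0_def using s0_SS[OF n] by force
  then show ?thesis unfolding R0_def using c by (simp add: card_Diff_singleton)
qed

lemma R0_V: "n \<ge> 2 \<Longrightarrow> R0 n \<subseteq> CCC_V n"
  unfolding R0_def using snoc_V by auto

lemma mem_R0: "n \<ge> 2 \<Longrightarrow> x \<in> CCC_V n \<Longrightarrow> length x = n \<Longrightarrow> last x \<in> {2,3,4,7} \<Longrightarrow> x \<noteq> z0 n \<Longrightarrow> x \<in> R0 n"
  using leaf_split[of n x] unfolding R0_def by (auto intro!: image_eqI[of _ _ "(butlast x, last x)"])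

lemma anti234: "x \<in> {1..8} \<Longrightarrow> y \<in> {1..8} \<Longrightarrow> H x y = 3 \<Longrightarrow> x \<noteq> 1 \<Longrightarrow> y \<noteq> 1 \<Longrightarrow> x \<in> {2,3,4} \<or> y \<in> {2,3,4}"
  apply (drule lab_cases, drule lab_cases)
  by (elim disjE; simp add: H_def hb1_def hb2_def hb3_def)

definition chr :: "nat \<Rightarrow> nat list \<Rightarrow> nat list \<Rightarrow> bool" where
  "chr n u v \<longleftrightarrow> length u = n \<and> (last u = 7 \<or> (butlast u = butlast v \<and> H (last u) (last v) = 3 \<and> last u \<noteq> 1))"

lemma hit:
  assumes n: "n \<ge> 2" and a: "a \<in> CCC_V n" and b: "b \<in> CCC_V n" and ab: "a \<noteq> b"
    and c1: "chr n a b" and c2: "chr n b a"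
  shows "a \<in> R0 n \<or> b \<in> R0 n"
proof -
  have la: "last a \<in> {1..8}" "last b \<in> {1..8}" using leaf_split[OF n a] leaf_split[OF n b] c1 c2
    unfolding chr_def by auto
  have len: "length a = n" "length b = n" using c1 c2 unfolding chr_def by auto
  show ?thesis
  proof (cases "last a = 7")
    case a7: True
    show ?thesis
    proof (cases "last b = 7")
      case True
      then show ?thesis using a7 ab mem_R0[OF n a len(1)] mem_R0[OF n b len(2)] by auto
    next
      case False
      then have "H (last b) 7 = 3" "last b \<noteq> 1" using c2 a7 unfolding chr_def by auto
      then show ?thesis using H_x7 la by auto
    qed
  next
    case a7: False
    then have A: "H (last a) (last b) = 3" "last a \<noteq> 1" using c1 unfolding chr_def by auto
    show ?thesis
    proof (cases "last b = 7")
      case True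
      then show ?thesis using A H_x7 la H_sym by metis
    next
      case False
      then have B: "last b \<noteq> 1" using c2 unfolding chr_def by auto
      have z: "last (z0 n) = 7" unfolding z0_def by simp
      have nz: "x \<noteq> z0 n" if "last x \<in> {2,3,4}" for x
      proof
        assume "x = z0 n"
        then have "last x = 7" using z by simp
        then show False using that by auto
      qed
      from anti234[OF la A B] show ?thesis
        using mem_R0[OF n a len(1)] mem_R0[OF n b len(2)] nz[of a] nz[of b] by auto
    qed
  qed
qed

lemma srs_R0:
  assumes n: "n \<ge> 2"
  shows "strong_resolving_set (CCC_V n) CCC_E (R0 n)"
  unfolding strong_resolving_set_def
proof (intro conjI ballI impI)
  show "R0 n \<subseteq> CCC_V n" using R0_V[OF n] .
  fix u v assume u: "u \<in> CCC_V n" and v: "v \<in> CCC_V n" and uv: "u \<noteq> v"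
  define S2 where "S2 = {(a,b). a \<in> CCC_V n \<and> b \<in> CCC_V n \<and> D a b = D a u + D u v + D v b}"
  have fS2: "finite S2"
  proof -
    have "S2 \<subseteq> CCC_V n \<times> CCC_V n" unfolding S2_def by auto
    then show ?thesis using finite_V finite_cartesian_product finite_subset by metis
  qed
  have uvS: "(u,v) \<in> S2" unfolding S2_def using u v by simp
  define f where "f = (\<lambda>(a::nat list, b::nat list). D a b)"
  have "Max (f ` S2) \<in> f ` S2" using fS2 uvS by (intro Max_in) auto
  then obtain a b where abS: "(a,b) \<in> S2" and fab: "f (a,b) = Max (f ` S2)" by auto
  have maxi: "D a' b' \<le> D a b" if "(a',b') \<in> S2" for a' b'
  proof -
    have "f (a',b') \<le> Max (f ` S2)" using fS2 that by (intro Max_ge) auto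
    then show ?thesis using fab unfolding f_def by simp
  qed
  have aV: "a \<in> CCC_V n" and bV: "b \<in> CCC_V n" and eab: "D a b = D a u + D u v + D v b"
    using abS unfolding S2_def by auto
  have "D u v > 0" using D_pos[OF u v uv] .
  then have ab: "a \<noteq> b" using eab by auto
  have ca: "chr n a b"
  proof (rule ccontr)
    assume nc: "\<not> chr n a b"
    obtain a' where a': "a' \<in> CCC_V n" "CCC_E a a'" "D b a' = D b a + 1"
      using ascent[OF n aV bV ab] nc unfolding chr_def by blast
    have L: "D u a' \<le> D u a + 1" using Lip[OF a'(2)] .
    have T1: "D a' b \<le> D a' u + D u b" using tri[OF u bV] .
    have T2: "D u b \<le> D u v + D v b" using tri[OF v bV] .
    have sy: "D a' u = D u a'" "D a u = D u a" "D b a' = D a' b" "D b a = D a b" using D_sym by auto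
    have "D a' b = D a' u + D u v + D v b" using L T1 T2 sy a'(3) eab by linarith
    then have "(a',b) \<in> S2" unfolding S2_def using a'(1) bV by auto
    then have "D a' b \<le> D a b" by (rule maxi)
    then show False using a'(3) sy by linarith
  qed
  have cb: "chr n b a"
  proof (rule ccontr)
    assume nc: "\<not> chr n b a"
    obtain b' where b': "b' \<in> CCC_V n" "CCC_E b b'" "D a b' = D a b + 1"
      using ascent[OF n bV aV ab[symmetric]] nc unfolding chr_def by blast
    have L: "D v b' \<le> D v b + 1" using Lip[OF b'(2)] .
    have T1: "D a b' \<le> D a v + D v b'" using tri[OF v b'(1)] .
    have T2: "D a v \<le> D a u + D u v" using tri[OF u v] .
    have "D a b' = D a u + D u v + D v b'" using L T1 T2 b'(3) eab by linarith
    then have "(a,b') \<in> S2" unfolding S2_def using b'(1) aV by auto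
    then have "D a b' \<le> D a b" by (rule maxi)
    then show False using b'(3) by linarith
  qed
  from hit[OF n aV bV ab ca cb]
  show "\<exists>w\<in>R0 n. strongly_resolves (CCC_V n) CCC_E w u v"
  proof
    assume aR: "a \<in> R0 n"
    have T1: "D a b \<le> D a v + D v b" using tri[OF v bV] .
    have T2: "D a v \<le> D a u + D u v" using tri[OF u v] .
    have sy: "D v u = D u v" "D u a = D a u" "D v a = D a v" using D_sym by auto
    have "D v u + D u a = D v a" using T1 T2 eab sy by linarith
    then have "u \<in> interval (CCC_V n) CCC_E v a" using interval_D[OF u v aV] by simp
    then show ?thesis using aR unfolding strongly_resolves_def by blast
  next
    assume bR: "b \<in> R0 n"
    have T1: "D a b \<le> D a u + D u b" using tri[OF u bV] .
    have T2: "D u b \<le> D u v + D v b" using tri[OF v bV] .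
    have "D u v + D v b = D u b" using T1 T2 eab by linarith
    then have "v \<in> interval (CCC_V n) CCC_E u b" using interval_D[OF v u bV] by simp
    then show ?thesis using bR unfolding strongly_resolves_def by blast
  qed
qed

theorem theorem2:
  fixes n :: nat
  assumes "n \<ge> 2"
  shows "sdim (CCC_V n) CCC_E = 32 * 7 ^ (n - 2) - 1"
proof -
  have fin: "finite (card ` {R. strong_resolving_set (CCC_V n) CCC_E R})"
  proof -
    have "{R. strong_resolving_set (CCC_V n) CCC_E R} \<subseteq> Pow (CCC_V n)"
      unfolding strong_resolving_set_def by auto
    then show ?thesis using finite_V by (meson finite_Pow_iff finite_imageI finite_subset)
  qed
  have "sdim (CCC_V n) CCC_E = 4 * card (SS n) - 1"
    unfolding sdim_def
  proof (rule Min_eqI[OF fin])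
    fix y assume "y \<in> card ` {R. strong_resolving_set (CCC_V n) CCC_E R}"
    then show "4 * card (SS n) - 1 \<le> y" using lower[OF assms] by auto
  next
    show "4 * card (SS n) - 1 \<in> card ` {R. strong_resolving_set (CCC_V n) CCC_E R}"
      using srs_R0[OF assms] card_R0[OF assms] by (metis (mono_tags, lifting) image_eqI mem_Collect_eq)
  qed
  then show ?thesis using card_SS[OF assms] by simp
qed



end
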